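(* Let $K$ be a field with $\mathrm{char}(K) = 0$ or $\mathrm{char}(K) > n$, let $1 \le d \le n$ and $N \ge n+d$. Then in $K[x_1,\dots,x_N]$, $$(S_N.\,e_n^d(x_1,\dots,x_n)) = (S_N.\,x_1\cdots x_d).$$
   Context: $e_n^d(x_1,\dots,x_n)$ denotes the elementary symmetric polynomial of degree $d$ in $x_1,\dots,x_n$. $S_N$ acts on $K[x_1,\dots,x_N]$ by permuting variables; $(S_N.g)$ denotes the ideal generated by the $S_N$-orbit of $g$. *)

theory Defs
  imports "HOL-Library.Poly_Mapping" "HOL-Combinatorics.Permutations"
begin

text \<open>Multivariate polynomials over 'a in variables x_0, x_1, ... (indexed by nat):
  a polynomial maps each monomial (exponent vector, nat  to its coefficient.
  Multiplication is the convolution product from Poly_Mapping.\<close>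
type_synonym 'a mpoly = "(nat \<Rightarrow>\<^sub>0 nat) \<Rightarrow>\<^sub>0 'a"

definition Var :: "nat \<Rightarrow> 'a::comm_ring_1 mpoly" where
  "Var i = Poly_Mapping.single (Poly_Mapping.single i 1) 1"

definition polys_in :: "nat \<Rightarrow> 'a::comm_ring_1 mpoly set" where
  "polys_in N = {p. \<forall>m \<in> Poly_Mapping.keys p. Poly_Mapping.keys m \<subseteq> {..<N}}"

definition ideal_gen :: "nat \<Rightarrow> 'a::comm_ring_1 mpoly set \<Rightarrow> 'a mpoly set" where
  "ideal_gen N G = {p. \<exists>F c. finite F \<and> F \<subseteq> G \<and> (\<forall>g\<in>F. c g \<in> polys_in N)
                          \<and> p = (\<Sum>g\<in>F. c g * g)}"

definition rename_mono :: "(nat \<Rightarrow> nat) \<Rightarrow> (nat \<Rightarrow>\<^sub>0 nat) \<Rightarrow> (nat \<Rightarrow>\<^sub>0 nat)" where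
  "rename_mono \<sigma> m = (\<Sum>i\<in>Poly_Mapping.keys m. Poly_Mapping.single (\<sigma> i) (Poly_Mapping.lookup m i))"

definition perm_act :: "(nat \<Rightarrow> nat) \<Rightarrow> 'a::comm_ring_1 mpoly \<Rightarrow> 'a mpoly" where
  "perm_act \<sigma> p = (\<Sum>m\<in>Poly_Mapping.keys p. Poly_Mapping.single (rename_mono \<sigma> m) (Poly_Mapping.lookup p m))"

definition orbit_SN :: "nat \<Rightarrow> 'a::comm_ring_1 mpoly \<Rightarrow> 'a mpoly set" where
  "orbit_SN N g = {perm_act \<sigma> g | \<sigma>. \<sigma> permutes {..<N}}"

definition elem_sym :: "nat \<Rightarrow> nat \<Rightarrow> 'a::comm_ring_1 mpoly" where
  "elem_sym n d = (\<Sum>S\<in>{S. S \<subseteq> {..<n} \<and> card S = d}. \<Prod>i\<in>S. Var i)"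

end

theory Submission
  imports Defs
begin


lemma polys_in_add: "p \<in> polys_in N \<Longrightarrow> q \<in> polys_in N \<Longrightarrow> p + q \<in> polys_in N"
proof -
  assume p: "p \<in> polys_in N" and q: "q \<in> polys_in N"
  have "Poly_Mapping.keys (p + q) \<subseteq> Poly_Mapping.keys p \<union> Poly_Mapping.keys q" by (rule keys_add)
  then show ?thesis using p q unfolding polys_in_def by blast
qed

lemma polys_in_mult: fixes p q :: "'a::comm_ring_1 mpoly" shows "p \<in> polys_in N \<Longrightarrow> q \<in> polys_in N \<Longrightarrow> p * q \<in> polys_in N"
proof -
  assume p: "p \<in> polys_in N" and q: "q \<in> polys_in N"
  show ?thesis unfolding polys_in_def
  proof (rule CollectI, rule ballI)
    fix m :: "nat \<Rightarrow>\<^sub>0 nat" assume "m \<in> Poly_Mapping.keys (p*q)"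
    then have "m \<in> {a + b |a b. a \<in> Poly_Mapping.keys p \<and> b \<in> Poly_Mapping.keys q}"
      using keys_mult[of p q] by (rule subsetD[rotated])
    then obtain a b where ab: "m = a + b" "a \<in> Poly_Mapping.keys p" "b \<in> Poly_Mapping.keys q" by blast
    have "Poly_Mapping.keys m \<subseteq> Poly_Mapping.keys a \<union> Poly_Mapping.keys b"
      unfolding ab(1) by (rule keys_add)
    moreover have "Poly_Mapping.keys a \<subseteq> {..<N}" using p ab(2) unfolding polys_in_def by blast
    moreover have "Poly_Mapping.keys b \<subseteq> {..<N}" using q ab(3) unfolding polys_in_def by blast
    ultimately show "Poly_Mapping.keys m \<subseteq> {..<N}" by blast
  qed
qed

lemma polys_in_uminus: "p \<in> polys_in N \<Longrightarrow> - p \<in> polys_in N"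
  unfolding polys_in_def by simp

lemma polys_in_const: fixes c :: "'a::comm_ring_1" shows "Poly_Mapping.single 0 c \<in> polys_in N"
  unfolding polys_in_def
proof (rule CollectI, rule ballI)
  fix m :: "nat \<Rightarrow>\<^sub>0 nat" assume "m \<in> Poly_Mapping.keys (Poly_Mapping.single 0 c)"
  then have "m = 0" by (metis empty_iff keys_single singletonD)
  then show "Poly_Mapping.keys m \<subseteq> {..<N}" by simp
qed

lemma polys_in_one: "1 \<in> polys_in N"
  using polys_in_const[of 1 N] by simp

lemma polys_in_zero: "0 \<in> polys_in N"
  unfolding polys_in_def by simp

lemma polys_in_Var: "i < N \<Longrightarrow> Var i \<in> polys_in N"
  unfolding polys_in_def Var_def by simp

lemma ideal_genI:
  assumes "finite F" "F \<subseteq> G" "\<forall>g\<in>F. c g \<in> polys_in N" "p = (\<Sum>g\<in>F. c g * g)"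
  shows "p \<in> ideal_gen N G"
  unfolding ideal_gen_def
  by (rule CollectI, rule exI[of _ F], rule exI[of _ c], intro conjI; fact)

lemma ideal_genE:
  assumes "p \<in> ideal_gen N G"
  obtains F c where "finite F" "F \<subseteq> G" "\<forall>g\<in>F. c g \<in> polys_in N" "p = (\<Sum>g\<in>F. c g * g)"
proof -
  from assms have "\<exists>F c. finite F \<and> F \<subseteq> G \<and> (\<forall>g\<in>F. c g \<in> polys_in N) \<and> p = (\<Sum>g\<in>F. c g * g)"
    unfolding ideal_gen_def by (rule CollectD)
  then obtain F c where "finite F \<and> F \<subseteq> G \<and> (\<forall>g\<in>F. c g \<in> polys_in N) \<and> p = (\<Sum>g\<in>F. c g * g)"
    by (elim exE)
  then show ?thesis using that by (elim conjE)
qed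

lemma ideal_zero: "0 \<in> ideal_gen N G"
  by (rule ideal_genI[where F="{}" and c="\<lambda>_. 0"]) simp_all

lemma ideal_in: "g \<in> G \<Longrightarrow> g \<in> ideal_gen N G"
  by (rule ideal_genI[where F="{g}" and c="\<lambda>_. 1"]) (simp_all add: polys_in_one)

lemma ideal_add: assumes "p \<in> ideal_gen N G" "q \<in> ideal_gen N G" shows "p + q \<in> ideal_gen N G"
proof -
  obtain F1 c1 where 1: "finite F1" "F1 \<subseteq> G" "\<forall>g\<in>F1. c1 g \<in> polys_in N" "p = (\<Sum>g\<in>F1. c1 g * g)"
    using assms(1) by (rule ideal_genE)
  obtain F2 c2 where 2: "finite F2" "F2 \<subseteq> G" "\<forall>g\<in>F2. c2 g \<in> polys_in N" "q = (\<Sum>g\<in>F2. c2 g * g)"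
    using assms(2) by (rule ideal_genE)
  define c where "c g = (if g \<in> F1 then c1 g else 0) + (if g \<in> F2 then c2 g else 0)" for g
  have "(\<Sum>g\<in>F1 \<union> F2. c g * g) = (\<Sum>g\<in>F1 \<union> F2. (if g \<in> F1 then c1 g * g else 0))
       + (\<Sum>g\<in>F1 \<union> F2. (if g \<in> F2 then c2 g * g else 0))"
  proof -
    have "c g * g = (if g \<in> F1 then c1 g * g else 0) + (if g \<in> F2 then c2 g * g else 0)" for g
      by (simp add: c_def distrib_right)
    then show ?thesis by (simp add: sum.distrib)
  qed
  also have "\<dots> = p + q"
    using 1 2 by (simp add: sum.inter_restrict[symmetric] Int_absorb1)
  finally have eq: "p + q = (\<Sum>g\<in>F1 \<union> F2. c g * g)" by simp
  have cin: "\<forall>g\<in>F1 \<union> F2. c g \<in> polys_in N"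
  proof
    fix g assume g: "g \<in> F1 \<union> F2"
    have a: "(if g \<in> F1 then c1 g else 0) \<in> polys_in N" using 1 by (simp add: polys_in_zero)
    have b: "(if g \<in> F2 then c2 g else 0) \<in> polys_in N" using 2 by (simp add: polys_in_zero)
    show "c g \<in> polys_in N" unfolding c_def by (rule polys_in_add[OF a b])
  qed
  show ?thesis by (rule ideal_genI[OF _ _ cin eq]) (use 1 2 in simp_all)
qed

lemma ideal_mult: assumes "q \<in> polys_in N" "p \<in> ideal_gen N G" shows "q * p \<in> ideal_gen N G"
proof -
  obtain F1 c1 where 1: "finite F1" "F1 \<subseteq> G" "\<forall>g\<in>F1. c1 g \<in> polys_in N" "p = (\<Sum>g\<in>F1. c1 g * g)"
    using assms(2) by (rule ideal_genE)
  have eq: "q * p = (\<Sum>g\<in>F1. (q * c1 g) * g)" using 1 by (simp add: sum_distrib_left mult.assoc)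
  have cin: "\<forall>g\<in>F1. q * c1 g \<in> polys_in N" using 1 assms(1) by (simp add: polys_in_mult)
  show ?thesis by (rule ideal_genI[OF 1(1) 1(2) cin eq])
qed

lemma ideal_uminus: fixes p :: "'a::comm_ring_1 mpoly" shows "p \<in> ideal_gen N G \<Longrightarrow> - p \<in> ideal_gen N G"
proof -
  assume "p \<in> ideal_gen N G"
  moreover have "(-1::'a mpoly) \<in> polys_in N" using polys_in_uminus[OF polys_in_one] .
  ultimately show ?thesis using ideal_mult[of "-1" N p G] by simp
qed

lemma ideal_diff: "p \<in> ideal_gen N G \<Longrightarrow> q \<in> ideal_gen N G \<Longrightarrow> p - q \<in> ideal_gen N G"
  using ideal_add[of p N G "-q"] ideal_uminus[of q N G] by simp

lemma ideal_sum: "finite A \<Longrightarrow> (\<And>x. x \<in> A \<Longrightarrow> f x \<in> ideal_gen N G) \<Longrightarrow> sum f A \<in> ideal_gen N G"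
proof (induction A rule: finite_induct)
  case empty then show ?case by (simp add: ideal_zero)
next
  case (insert x F) then show ?case by (simp add: ideal_add)
qed

lemma ideal_subset: assumes "G \<subseteq> ideal_gen N H" shows "ideal_gen N G \<subseteq> ideal_gen N H"
proof
  fix p assume "p \<in> ideal_gen N G"
  then obtain F1 c1 where 1: "finite F1" "F1 \<subseteq> G" "\<forall>g\<in>F1. c1 g \<in> polys_in N" "p = (\<Sum>g\<in>F1. c1 g * g)"
    by (rule ideal_genE)
  have "(\<Sum>g\<in>F1. c1 g * g) \<in> ideal_gen N H"
  proof (rule ideal_sum[OF 1(1)])
    fix g assume g: "g \<in> F1"
    show "c1 g * g \<in> ideal_gen N H" using 1(2,3) assms g by (intro ideal_mult) auto
  qed
  then show "p \<in> ideal_gen N H" using 1(4) by simp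
qed

definition ind :: "nat set \<Rightarrow> (nat \<Rightarrow>\<^sub>0 nat)" where
  "ind S = (\<Sum>i\<in>S. Poly_Mapping.single i 1)"

definition mon :: "nat set \<Rightarrow> 'a::comm_ring_1 mpoly" where
  "mon S = Poly_Mapping.single (ind S) 1"

lemma lookup_ind: "finite S \<Longrightarrow> Poly_Mapping.lookup (ind S) j = (if j \<in> S then 1 else 0)"
proof -
  assume S: "finite S"
  have "Poly_Mapping.lookup (ind S) j = (\<Sum>i\<in>S. (if i = j then 1 else 0))"
    unfolding ind_def lookup_sum lookup_single when_def by (rule refl)
  also have "\<dots> = (if j \<in> S then 1 else 0)" using S by (rule sum.delta)
  finally show ?thesis .
qed

lemma keys_ind: "finite S \<Longrightarrow> Poly_Mapping.keys (ind S) = S"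
  by (rule set_eqI) (simp add: in_keys_iff lookup_ind)

lemma mon_empty: "mon {} = 1"
  unfolding mon_def ind_def by simp

lemma mon_insert: "finite S \<Longrightarrow> i \<notin> S \<Longrightarrow> mon (insert i S) = Var i * mon S"
  unfolding mon_def Var_def ind_def by (simp add: mult_single)

lemma prod_Var: "finite S \<Longrightarrow> (\<Prod>i\<in>S. Var i) = mon S"
  by (induction S rule: finite_induct) (auto simp: mon_empty mon_insert)

lemma rename_ind: "finite S \<Longrightarrow> inj_on \<sigma> S \<Longrightarrow> rename_mono \<sigma> (ind S) = ind (\<sigma> ` S)"
proof -
  assume S: "finite S" and inj: "inj_on \<sigma> S"
  have "rename_mono \<sigma> (ind S) = (\<Sum>i\<in>S. Poly_Mapping.single (\<sigma> i) 1)"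
    unfolding rename_mono_def keys_ind[OF S] by (rule sum.cong) (simp_all add: lookup_ind S)
  also have "\<dots> = ind (\<sigma> ` S)" unfolding ind_def by (simp add: sum.reindex[OF inj] o_def)
  finally show ?thesis .
qed

lemma perm_act_superset:
  assumes "finite K" "Poly_Mapping.keys p \<subseteq> K"
  shows "perm_act \<sigma> p = (\<Sum>m\<in>K. Poly_Mapping.single (rename_mono \<sigma> m) (Poly_Mapping.lookup p m))"
  unfolding perm_act_def
  by (rule sum.mono_neutral_left) (use assms in \<open>auto simp: in_keys_iff\<close>)

lemma perm_act_add: fixes p q :: "'a::comm_ring_1 mpoly"
  shows "perm_act \<sigma> (p + q) = perm_act \<sigma> p + perm_act \<sigma> q"
proof -
  let ?K = "Poly_Mapping.keys p \<union> Poly_Mapping.keys q"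
  have f: "finite ?K" by simp
  have kp: "Poly_Mapping.keys p \<subseteq> ?K" by (rule Un_upper1)
  have kq: "Poly_Mapping.keys q \<subseteq> ?K" by (rule Un_upper2)
  have "perm_act \<sigma> (p + q) = (\<Sum>m\<in>?K. Poly_Mapping.single (rename_mono \<sigma> m) (Poly_Mapping.lookup (p+q) m))"
    by (rule perm_act_superset[OF f keys_add])
  also have "\<dots> = (\<Sum>m\<in>?K. Poly_Mapping.single (rename_mono \<sigma> m) (Poly_Mapping.lookup p m)
     + Poly_Mapping.single (rename_mono \<sigma> m) (Poly_Mapping.lookup q m))"
    by (rule sum.cong[OF refl]) (simp only: lookup_add single_add)
  also have "\<dots> = (\<Sum>m\<in>?K. Poly_Mapping.single (rename_mono \<sigma> m) (Poly_Mapping.lookup p m))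
     + (\<Sum>m\<in>?K. Poly_Mapping.single (rename_mono \<sigma> m) (Poly_Mapping.lookup q m))"
    by (rule sum.distrib)
  also have "\<dots> = perm_act \<sigma> p + perm_act \<sigma> q"
    by (simp only: perm_act_superset[OF f kp] perm_act_superset[OF f kq])
  finally show ?thesis .
qed

lemma perm_act_zero: "perm_act \<sigma> 0 = 0"
  unfolding perm_act_def by simp

lemma perm_act_sum: "perm_act \<sigma> (sum f A) = (\<Sum>x\<in>A. perm_act \<sigma> (f x))"
  by (induction A rule: infinite_finite_induct) (auto simp: perm_act_zero perm_act_add)

lemma perm_act_mon: "finite S \<Longrightarrow> inj_on \<sigma> S \<Longrightarrow> perm_act \<sigma> (mon S) = mon (\<sigma> ` S)"
  unfolding perm_act_def mon_def by (simp add: rename_ind)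

definition Esym :: "nat set \<Rightarrow> nat \<Rightarrow> 'a::comm_ring_1 mpoly" where
  "Esym B k = (\<Sum>S\<in>{S. S \<subseteq> B \<and> card S = k}. mon S)"

lemma elem_sym_Esym: "elem_sym n d = Esym {..<n} d"
  unfolding elem_sym_def Esym_def
  by (rule sum.cong) (auto intro: prod_Var finite_subset)

lemma perm_act_Esym:
  assumes A: "finite A" and inj\<sigma>: "inj \<sigma>"
  shows "perm_act \<sigma> (Esym A k) = Esym (\<sigma> ` A) k"
proof -
  have inj: "inj_on ((`) \<sigma>) {S. S \<subseteq> A \<and> card S = k}"
  proof (rule inj_onI)
    fix X Y assume "\<sigma> ` X = \<sigma> ` Y"
    then show "X = Y" using inj\<sigma> by (simp add: inj_image_eq_iff)
  qed
  have img: "((`) \<sigma>) ` {S. S \<subseteq> A \<and> card S = k} = {S. S \<subseteq> \<sigma> ` A \<and> card S = k}"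
  proof (intro equalityI subsetI)
    fix T assume "T \<in> ((`) \<sigma>) ` {S. S \<subseteq> A \<and> card S = k}"
    then obtain S where S: "S \<subseteq> A" "card S = k" "T = \<sigma> ` S" by blast
    have "card T = k" unfolding S(3) using S(2) inj_on_subset[OF inj\<sigma> subset_UNIV] by (simp add: card_image)
    moreover have "T \<subseteq> \<sigma> ` A" using S by (simp add: image_mono)
    ultimately show "T \<in> {S. S \<subseteq> \<sigma> ` A \<and> card S = k}" by simp
  next
    fix T assume T: "T \<in> {S. S \<subseteq> \<sigma> ` A \<and> card S = k}"
    then have "T \<subseteq> \<sigma> ` A" by simp
    then obtain AA where AA: "AA \<subseteq> A" "T = \<sigma> ` AA" by (auto simp: subset_image_iff)
    have "card AA = card T" unfolding AA(2) using inj_on_subset[OF inj\<sigma> subset_UNIV] by (simp add: card_image)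
    then have "AA \<in> {S. S \<subseteq> A \<and> card S = k}" using AA T by simp
    then show "T \<in> ((`) \<sigma>) ` {S. S \<subseteq> A \<and> card S = k}" using AA(2) by (rule rev_image_eqI)
  qed
  have "perm_act \<sigma> (Esym A k) = (\<Sum>S\<in>{S. S \<subseteq> A \<and> card S = k}. perm_act \<sigma> (mon S))"
    unfolding Esym_def by (rule perm_act_sum)
  also have "\<dots> = (\<Sum>S\<in>{S. S \<subseteq> A \<and> card S = k}. mon (\<sigma> ` S))"
  proof (rule sum.cong[OF refl])
    fix S assume "S \<in> {S. S \<subseteq> A \<and> card S = k}"
    then have "finite S" using A finite_subset by blast
    then show "perm_act \<sigma> (mon S) = mon (\<sigma> ` S)"
      using inj_on_subset[OF inj\<sigma> subset_UNIV] by (rule perm_act_mon)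
  qed
  also have "\<dots> = (\<Sum>T\<in>((`) \<sigma>) ` {S. S \<subseteq> A \<and> card S = k}. mon T)"
    by (simp only: sum.reindex[OF inj] o_def)
  also have "\<dots> = Esym (\<sigma> ` A) k" unfolding Esym_def img by (rule refl)
  finally show ?thesis .
qed

lemma Esym_insert:
  assumes "finite B" "a \<notin> B"
  shows "Esym (insert a B) (Suc k) = Esym B (Suc k) + Var a * Esym B k"
proof -
  have eq: "{S. S \<subseteq> insert a B \<and> card S = Suc k}
     = {S. S \<subseteq> B \<and> card S = Suc k} \<union> (insert a) ` {S. S \<subseteq> B \<and> card S = k}"
  proof (intro equalityI subsetI)
    fix S assume S: "S \<in> {S. S \<subseteq> insert a B \<and> card S = Suc k}"
    show "S \<in> {S. S \<subseteq> B \<and> card S = Suc k} \<union> (insert a) ` {S. S \<subseteq> B \<and> card S = k}"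
    proof (cases "a \<in> S")
      case True
      then have "S = insert a (S - {a})" by auto
      moreover have "S - {a} \<subseteq> B" "card (S - {a}) = k"
        using S True assms(1) finite_subset[of S "insert a B"] by auto
      ultimately show ?thesis by blast
    next
      case False then show ?thesis using S by auto
    qed
  next
    fix S assume "S \<in> {S. S \<subseteq> B \<and> card S = Suc k} \<union> (insert a) ` {S. S \<subseteq> B \<and> card S = k}"
    then show "S \<in> {S. S \<subseteq> insert a B \<and> card S = Suc k}"
      using assms finite_subset[of _ B] by (auto simp: card_insert_if)
  qed
  have inj: "inj_on (insert a) {S. S \<subseteq> B \<and> card S = k}"
  proof (rule inj_onI)
    fix X Y assume X: "X \<in> {S. S \<subseteq> B \<and> card S = k}" and Y: "Y \<in> {S. S \<subseteq> B \<and> card S = k}"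
      and e: "insert a X = insert a Y"
    have "a \<notin> X" "a \<notin> Y" using X Y assms(2) by auto
    then have "X = insert a X - {a}" "Y = insert a Y - {a}" by auto
    then show "X = Y" using e by metis
  qed
  have fin1: "finite {S. S \<subseteq> B \<and> card S = Suc k}" using assms(1) by simp
  have fin2: "finite ((insert a) ` {S. S \<subseteq> B \<and> card S = k})" using assms(1) by simp
  have disj: "{S. S \<subseteq> B \<and> card S = Suc k} \<inter> (insert a) ` {S. S \<subseteq> B \<and> card S = k} = {}"
    using assms(2) by auto
  have "Esym (insert a B) (Suc k) = Esym B (Suc k) + (\<Sum>S\<in>(insert a) ` {S. S \<subseteq> B \<and> card S = k}. mon S)"
    unfolding Esym_def eq by (rule sum.union_disjoint[OF fin1 fin2 disj])
  also have "(\<Sum>S\<in>(insert a) ` {S. S \<subseteq> B \<and> card S = k}. mon S) = Var a * Esym B k"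
    unfolding Esym_def sum.reindex[OF inj] sum_distrib_left
    by (rule sum.cong) (use assms finite_subset in \<open>auto intro!: mon_insert\<close>)
  finally show ?thesis .
qed




lemma binom_nonzero:
  assumes "CHAR('a::field) = 0 \<or> CHAR('a) > n" "m \<le> n" "j \<le> m"
  shows "(of_nat (m choose j) :: 'a) \<noteq> 0"
proof -
  have "(of_nat i :: 'a) \<noteq> 0" if "i \<in> {1..m}" for i
  proof
    assume "(of_nat i :: 'a) = 0"
    then have "CHAR('a) dvd i" by (simp add: of_nat_eq_0_iff_char_dvd)
    then show False using assms that by (auto dest: dvd_imp_le)
  qed
  then have "(\<Prod>i\<in>{1..m}. (of_nat i :: 'a)) \<noteq> 0" by simp
  then have "(of_nat (fact m) :: 'a) \<noteq> 0" by (simp add: fact_prod)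
  moreover have "fact j * fact (m - j) * (m choose j) = (fact m :: nat)"
    using binomial_fact_lemma[OF assms(3)] by simp
  ultimately show ?thesis by (metis mult_zero_right of_nat_mult)
qed

lemma exists_perm:
  assumes "finite U" "A \<subseteq> U" "B \<subseteq> U" "card A = card B"
  shows "\<exists>\<sigma>. \<sigma> permutes U \<and> \<sigma> ` A = B"
proof -
  have fA: "finite A" "finite B" using assms finite_subset by auto
  obtain f where f: "bij_betw f A B" using finite_same_card_bij[OF fA assms(4)] by blast
  have "card (U - A) = card (U - B)" using assms fA by (simp add: card_Diff_subset)
  then obtain g where g: "bij_betw g (U - A) (U - B)"
    using finite_same_card_bij assms(1) by blast
  define \<sigma> where "\<sigma> x = (if x \<in> A then f x else if x \<in> U then g x else x)" for x
  have b1: "bij_betw \<sigma> A B" using f unfolding \<sigma>_def by (rule bij_betw_cong[THEN iffD1, rotated]) auto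
  have b2: "bij_betw \<sigma> (U - A) (U - B)" using g unfolding \<sigma>_def by (rule bij_betw_cong[THEN iffD1, rotated]) auto
  have "bij_betw \<sigma> (A \<union> (U - A)) (B \<union> (U - B))"
    by (rule bij_betw_combine[OF b1 b2]) auto
  moreover have "A \<union> (U - A) = U" "B \<union> (U - B) = U" using assms by auto
  ultimately have "bij_betw \<sigma> U U" by simp
  then have "\<sigma> permutes U" by (rule bij_imp_permutes) (use assms in \<open>auto simp: \<sigma>_def\<close>)
  moreover have "\<sigma> ` A = B" using b1 by (simp add: bij_betw_def)
  ultimately show ?thesis by blast
qed


lemma conn_lemma:
  fixes f :: "nat set \<Rightarrow> 'a::comm_ring_1 mpoly"
  assumes finU: "finite U" and RU: "R \<subseteq> U" and cR: "card R = Suc k"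
    and swap: "\<And>a b R'. a \<in> U \<Longrightarrow> b \<in> U \<Longrightarrow> a \<noteq> b \<Longrightarrow> R' \<subseteq> U - {a,b} \<Longrightarrow> card R' = k
         \<Longrightarrow> f (insert a R') - f (insert b R') \<in> ideal_gen N G"
  shows "S \<subseteq> U \<Longrightarrow> card S = Suc k \<Longrightarrow> f S - f R \<in> ideal_gen N G"
proof (induction "card (S - R)" arbitrary: S rule: less_induct)
  case less
  have fS: "finite S" using finite_subset[OF less.prems(1) finU] .
  have fR: "finite R" using finite_subset[OF RU finU] .
  show ?case
  proof (cases "S \<subseteq> R")
    case True
    have "S = R" using card_subset_eq[OF fR True] less.prems(2) cR by simp
    then show ?thesis by (simp add: ideal_zero)
  next
    case False
    then obtain s where s: "s \<in> S" "s \<notin> R" by blast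
    have "\<not> R \<subseteq> S"
    proof
      assume "R \<subseteq> S"
      then have "R = S" using card_subset_eq[OF fS] less.prems(2) cR by simp
      then show False using s by blast
    qed
    then obtain r where r: "r \<in> R" "r \<notin> S" by blast
    define R' where "R' = S - {s}"
    have ins: "insert s R' = S" using s(1) unfolding R'_def by blast
    have fR': "finite R'" unfolding R'_def using fS by simp
    have cR': "card R' = k" unfolding R'_def using fS s(1) less.prems(2) by simp
    have R'U: "R' \<subseteq> U - {s, r}" unfolding R'_def using less.prems(1) r(2) by blast
    have sU: "s \<in> U" using s(1) less.prems(1) by blast
    have rU: "r \<in> U" using r(1) RU by blast
    have sr: "s \<noteq> r" using s r by blast
    have 1: "f S - f (insert r R') \<in> ideal_gen N G" using swap[OF sU rU sr R'U cR'] ins by simp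
    have eqd: "insert r R' - R = (S - R) - {s}" unfolding R'_def using r s by blast
    have lt: "card (insert r R' - R) < card (S - R)" unfolding eqd
      by (rule card_Diff1_less) (use s fS in simp_all)
    have sub: "insert r R' \<subseteq> U" using rU R'U by blast
    have rR': "r \<notin> R'" unfolding R'_def using r(2) by blast
    have c: "card (insert r R') = Suc k" using cR' rR' fR' by simp
    have 2: "f (insert r R') - f R \<in> ideal_gen N G" by (rule less.hyps[OF lt sub c])
    have "f S - f R = (f S - f (insert r R')) + (f (insert r R') - f R)" by simp
    then show ?thesis using ideal_add[OF 1 2] by simp
  qed
qed

lemma scale_back:
  fixes x :: "'a::field mpoly"
  assumes c: "(of_nat m :: 'a) \<noteq> 0" and x: "of_nat m * x \<in> ideal_gen N G"
  shows "x \<in> ideal_gen N G"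
proof -
  have e: "(of_nat m :: 'a mpoly) = Poly_Mapping.single 0 (of_nat m)" by simp
  have inv: "Poly_Mapping.single 0 (inverse (of_nat m :: 'a)) * (of_nat m :: 'a mpoly) = 1"
    unfolding e mult_single using c by simp
  have "Poly_Mapping.single 0 (inverse (of_nat m :: 'a)) * (of_nat m * x)
        = (Poly_Mapping.single 0 (inverse (of_nat m :: 'a)) * of_nat m) * x"
    by (rule mult.assoc[symmetric])
  also have "\<dots> = x" unfolding inv by simp
  finally have eq: "Poly_Mapping.single 0 (inverse (of_nat m :: 'a)) * (of_nat m * x) = x" .
  have "Poly_Mapping.single 0 (inverse (of_nat m :: 'a)) * (of_nat m * x) \<in> ideal_gen N G"
    by (rule ideal_mult[OF polys_in_const x])
  then show ?thesis by (simp only: eq)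
qed

lemma main_ind:
  fixes P :: "'a::field mpoly"
  assumes char: "CHAR('a) = 0 \<or> CHAR('a) > n" and dn: "d \<le> n"
  shows "k \<le> d \<Longrightarrow> P \<in> polys_in N \<Longrightarrow> card ({..<N} - Z) \<ge> n - d + 2*k
    \<Longrightarrow> (\<forall>B. B \<subseteq> {..<N} - Z \<and> card B = n - d + k \<longrightarrow> P * Esym B k \<in> ideal_gen N G)
    \<Longrightarrow> R \<subseteq> {..<N} - Z \<Longrightarrow> card R = k \<Longrightarrow> P * mon R \<in> ideal_gen N G"
proof (induction k arbitrary: P Z R)
  case 0
  have fR: "finite R" using finite_subset[OF 0(5)] by simp
  have R0: "R = {}" using 0(6) fR by simp
  have "n - d \<le> card ({..<N} - Z)" using 0(3) by simp
  then obtain B where B: "B \<subseteq> {..<N} - Z" "card B = n - d" "finite B"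
    by (rule obtain_subset_with_card_n)
  have "{S. S \<subseteq> B \<and> card S = 0} = {{}}"
  proof (intro equalityI subsetI)
    fix S assume "S \<in> {S. S \<subseteq> B \<and> card S = 0}"
    then have "S \<subseteq> B" "card S = 0" by simp_all
    moreover have "finite S" using finite_subset[OF \<open>S \<subseteq> B\<close> B(3)] .
    ultimately show "S \<in> {{}}" by simp
  qed simp
  then have E0: "Esym B 0 = (1 :: 'a mpoly)" unfolding Esym_def by (simp add: mon_empty)
  have "P * Esym B 0 \<in> ideal_gen N G" using 0(4) B(1,2) by simp
  then show ?case unfolding R0 mon_empty using E0 by simp
next
  case (Suc k)
  define U where "U = {..<N} - Z"
  have finU: "finite U" unfolding U_def by simp
  have hyp: "P * Esym B (Suc k) \<in> ideal_gen N G" if "B \<subseteq> U" "card B = n - d + Suc k" for B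
    using Suc.prems(4) that unfolding U_def by blast
  have swap: "P * mon (insert a R') - P * mon (insert b R') \<in> ideal_gen N G"
    if ab: "a \<in> U" "b \<in> U" "a \<noteq> b" and R': "R' \<subseteq> U - {a,b}" "card R' = k" for a b R'
  proof -
    define Z' where "Z' = insert a (insert b Z)"
    have U': "{..<N} - Z' = U - {a,b}" unfolding Z'_def U_def by blast
    have cardU': "card (U - {a,b}) = card U - 2"
    proof -
      have "{a,b} \<subseteq> U" using ab by blast
      then have "card (U - {a,b}) = card U - card {a,b}" using card_Diff_subset[of "{a,b}" U] by simp
      then show ?thesis using ab(3) by simp
    qed
    have finR': "finite R'" using finite_subset[OF R'(1)] finU by simp
    have aN: "a < N" "b < N" using ab unfolding U_def by simp_all
    have Pp: "P * (Var a - Var b) \<in> polys_in N"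
    proof -
      have "Var a - Var b \<in> polys_in N" unfolding diff_conv_add_uminus
        by (rule polys_in_add[OF polys_in_Var[OF aN(1)] polys_in_uminus[OF polys_in_Var[OF aN(2)]]])
      then show ?thesis by (rule polys_in_mult[OF Suc.prems(2)])
    qed
    have k1: "k \<le> d" using Suc.prems(1) by simp
    have room: "n - d + 2 * k \<le> card ({..<N} - Z')"
      using Suc.prems(3) cardU' U' unfolding U_def by simp
    have R'Z: "R' \<subseteq> {..<N} - Z'" using R' U' by simp
    have hypB: "\<forall>B. B \<subseteq> {..<N} - Z' \<and> card B = n - d + k \<longrightarrow> P * (Var a - Var b) * Esym B k \<in> ideal_gen N G"
    proof (intro allI impI)
      fix B assume B: "B \<subseteq> {..<N} - Z' \<and> card B = n - d + k"
      have BU: "B \<subseteq> U - {a,b}" using B U' by simp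
      have fB: "finite B" using finite_subset[of B U] BU finU by blast
      have aB: "a \<notin> B" "b \<notin> B" using BU by blast+
      have e: "P * (Var a - Var b) * Esym B k = P * Esym (insert a B) (Suc k) - P * Esym (insert b B) (Suc k)"
        unfolding Esym_insert[OF fB aB(1)] Esym_insert[OF fB aB(2)] by (simp add: algebra_simps)
      have c: "card (insert a B) = n - d + Suc k" "card (insert b B) = n - d + Suc k"
        using B fB aB by simp_all
      have s: "insert a B \<subseteq> U" "insert b B \<subseteq> U" using BU ab by blast+
      show "P * (Var a - Var b) * Esym B k \<in> ideal_gen N G"
        unfolding e by (rule ideal_diff[OF hyp[OF s(1) c(1)] hyp[OF s(2) c(2)]])
    qed
    have "P * (Var a - Var b) * mon R' \<in> ideal_gen N G"
      by (rule Suc.IH[OF k1 Pp room hypB R'Z R'(2)])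
    moreover have "a \<notin> R'" "b \<notin> R'" using R'(1) by blast+
    then have "P * (Var a - Var b) * mon R' = P * mon (insert a R') - P * mon (insert b R')"
      unfolding mon_insert[OF finR' \<open>a \<notin> R'\<close>] mon_insert[OF finR' \<open>b \<notin> R'\<close>] by (simp add: algebra_simps)
    ultimately show ?thesis by simp
  qed
  have RU: "R \<subseteq> U" "card R = Suc k" using Suc.prems(5,6) unfolding U_def by simp_all
  have fR: "finite R" using finite_subset[OF RU(1) finU] .
  have conn: "P * mon S - P * mon R \<in> ideal_gen N G" if "S \<subseteq> U" "card S = Suc k" for S
    by (rule conn_lemma[of U R k "\<lambda>S. P * mon S" N G S, OF finU RU(1) RU(2) swap that])
  have cUR: "card (U - R) = card U - card R" using card_Diff_subset[OF fR RU(1)] .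
  have "n - d + Suc k - card R \<le> card (U - R)"
    using Suc.prems(3) cUR RU(2) unfolding U_def by simp
  then obtain B0 where B0: "B0 \<subseteq> U - R" "card B0 = n - d + Suc k - card R" "finite B0"
    by (rule obtain_subset_with_card_n)
  define B where "B = R \<union> B0"
  have fB: "finite B" unfolding B_def using fR B0(3) by simp
  have BU: "B \<subseteq> U" unfolding B_def using RU(1) B0(1) by blast
  have RB: "R \<subseteq> B" unfolding B_def by blast
  have cB: "card B = n - d + Suc k"
  proof -
    have "R \<inter> B0 = {}" using B0(1) by blast
    then have "card B = card R + card B0" unfolding B_def by (rule card_Un_disjoint[OF fR B0(3)])
    then show ?thesis using B0(2) RU(2) by simp
  qed
  define F where "F = {S. S \<subseteq> B \<and> card S = Suc k}"
  have finF: "finite F" unfolding F_def using fB by simp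
  have cardF: "card F = (n - d + Suc k) choose Suc k" unfolding F_def using n_subsets[OF fB, of "Suc k"] cB by simp
  have in1: "P * Esym B (Suc k) \<in> ideal_gen N G" by (rule hyp[OF BU cB])
  have in2: "(\<Sum>S\<in>F. P * mon S - P * mon R) \<in> ideal_gen N G"
  proof (rule ideal_sum[OF finF])
    fix S assume "S \<in> F"
    then have "S \<subseteq> U" "card S = Suc k" unfolding F_def using BU by auto
    then show "P * mon S - P * mon R \<in> ideal_gen N G" by (rule conn)
  qed
  have s1: "P * Esym B (Suc k) = (\<Sum>S\<in>F. P * mon S)" unfolding Esym_def F_def by (rule sum_distrib_left)
  have s2: "(\<Sum>S\<in>F. P * mon S - P * mon R) = (\<Sum>S\<in>F. P * mon S) - of_nat (card F) * (P * mon R)"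
    by (simp add: sum_subtractf)
  have "of_nat (card F) * (P * mon R) = P * Esym B (Suc k) - (\<Sum>S\<in>F. P * mon S - P * mon R)"
    unfolding s1 s2 by simp
  then have X: "of_nat (card F) * (P * mon R) \<in> ideal_gen N G"
    using ideal_diff[OF in1 in2] by simp
  have c0: "(of_nat (card F) :: 'a) \<noteq> 0" unfolding cardF
    by (rule binom_nonzero[OF char]) (use dn Suc.prems(1) in simp_all)
  show ?case by (rule scale_back[OF c0 X])
qed

lemma orbit_memI: "\<sigma> permutes {..<N} \<Longrightarrow> perm_act \<sigma> g \<in> orbit_SN N g"
  unfolding orbit_SN_def by (rule CollectI, rule exI[of _ \<sigma>], rule conjI[OF refl])

lemma orbit_memE:
  assumes "x \<in> orbit_SN N g"
  obtains \<sigma> where "\<sigma> permutes {..<N}" "x = perm_act \<sigma> g"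
  using assms unfolding orbit_SN_def by blast

theorem proposition2p1:
  fixes n d N :: nat
  assumes "CHAR('a::field) = 0 \<or> CHAR('a) > n"
    and "1 \<le> d" and "d \<le> n" and "N \<ge> n + d"
  shows "ideal_gen N (orbit_SN N (elem_sym n d :: 'a mpoly))
         = ideal_gen N (orbit_SN N (\<Prod>i<d. Var i :: 'a mpoly))"
proof -
  have pm: "(\<Prod>i<d. Var i :: 'a mpoly) = mon {..<d}" by (simp add: prod_Var)
  have monin: "mon S \<in> ideal_gen N (orbit_SN N (mon {..<d} :: 'a mpoly))"
    if S: "S \<subseteq> {..<N}" "card S = d" for S
  proof -
    obtain \<tau> where \<tau>: "\<tau> permutes {..<N}" "\<tau> ` {..<d} = S"
      using exists_perm[of "{..<N}" "{..<d}" S] S assms by auto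
    have eq: "perm_act \<tau> (mon {..<d}) = (mon S :: 'a mpoly)"
      using \<tau> permutes_inj[OF \<tau>(1)] by (simp add: perm_act_mon inj_on_subset)
    have "perm_act \<tau> (mon {..<d}) \<in> orbit_SN N (mon {..<d} :: 'a mpoly)" by (rule orbit_memI[OF \<tau>(1)])
    then have "mon S \<in> orbit_SN N (mon {..<d} :: 'a mpoly)" unfolding eq .
    then show ?thesis by (rule ideal_in)
  qed
  have Ein: "Esym B d \<in> ideal_gen N (orbit_SN N (elem_sym n d :: 'a mpoly))"
    if B: "B \<subseteq> {..<N}" "card B = n" for B
  proof -
    obtain \<tau> where \<tau>: "\<tau> permutes {..<N}" "\<tau> ` {..<n} = B"
      using exists_perm[of "{..<N}" "{..<n}" B] B assms by auto
    have eq: "perm_act \<tau> (elem_sym n d) = (Esym B d :: 'a mpoly)"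
      using \<tau> permutes_inj[OF \<tau>(1)] by (simp add: elem_sym_Esym perm_act_Esym)
    have "perm_act \<tau> (elem_sym n d) \<in> orbit_SN N (elem_sym n d :: 'a mpoly)" by (rule orbit_memI[OF \<tau>(1)])
    then have "Esym B d \<in> orbit_SN N (elem_sym n d :: 'a mpoly)" unfolding eq .
    then show ?thesis by (rule ideal_in)
  qed
  show ?thesis unfolding pm
  proof (intro equalityI ideal_subset subsetI)
    fix x assume "x \<in> orbit_SN N (elem_sym n d :: 'a mpoly)"
    then obtain \<sigma> where \<sigma>: "\<sigma> permutes {..<N}" "x = perm_act \<sigma> (elem_sym n d)"
      by (rule orbit_memE)
    have sub: "\<sigma> ` {..<n} \<subseteq> {..<N}" using permutes_image[OF \<sigma>(1)] assms by auto
    have "x = Esym (\<sigma> ` {..<n}) d"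
      using \<sigma> permutes_inj[OF \<sigma>(1)] by (simp add: elem_sym_Esym perm_act_Esym)
    moreover have "Esym (\<sigma> ` {..<n}) d \<in> ideal_gen N (orbit_SN N (mon {..<d} :: 'a mpoly))"
      unfolding Esym_def
    proof (rule ideal_sum)
      show "finite {S. S \<subseteq> \<sigma> ` {..<n} \<and> card S = d}" by simp
    next
      fix S assume "S \<in> {S. S \<subseteq> \<sigma> ` {..<n} \<and> card S = d}"
      then have "S \<subseteq> \<sigma> ` {..<n}" "card S = d" by simp_all
      then have "S \<subseteq> {..<N}" "card S = d" using sub by (blast, simp)
      then show "mon S \<in> ideal_gen N (orbit_SN N (mon {..<d} :: 'a mpoly))" by (rule monin)
    qed
    ultimately show "x \<in> ideal_gen N (orbit_SN N (mon {..<d}))" by simp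
  next
    fix x assume "x \<in> orbit_SN N (mon {..<d} :: 'a mpoly)"
    then obtain \<sigma> where \<sigma>: "\<sigma> permutes {..<N}" "x = perm_act \<sigma> (mon {..<d})"
      by (rule orbit_memE)
    have x: "x = mon (\<sigma> ` {..<d})"
      using \<sigma> permutes_inj[OF \<sigma>(1)] by (simp add: perm_act_mon inj_on_subset)
    have sub: "\<sigma> ` {..<d} \<subseteq> {..<N}" using permutes_image[OF \<sigma>(1)] assms by auto
    have card: "card (\<sigma> ` {..<d}) = d"
      using permutes_inj[OF \<sigma>(1)] by (simp add: card_image inj_on_subset)
    have "1 * mon (\<sigma> ` {..<d}) \<in> ideal_gen N (orbit_SN N (elem_sym n d :: 'a mpoly))"
    proof (rule main_ind[OF assms(1) assms(3), of d 1 N "{}"])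
      show "d \<le> d" by simp
      show "1 \<in> polys_in N" by (rule polys_in_one)
      show "n - d + 2 * d \<le> card ({..<N} - {})" using assms by simp
      show "\<forall>B. B \<subseteq> {..<N} - {} \<and> card B = n - d + d \<longrightarrow>
         1 * Esym B d \<in> ideal_gen N (orbit_SN N (elem_sym n d :: 'a mpoly))"
      proof (intro allI impI)
        fix B assume B: "B \<subseteq> {..<N} - {} \<and> card B = n - d + d"
        then have "B \<subseteq> {..<N}" "card B = n" using assms(3) by simp_all
        then have "Esym B d \<in> ideal_gen N (orbit_SN N (elem_sym n d :: 'a mpoly))" by (rule Ein)
        then show "1 * Esym B d \<in> ideal_gen N (orbit_SN N (elem_sym n d :: 'a mpoly))" by simp
      qed
      show "\<sigma> ` {..<d} \<subseteq> {..<N} - {}" using sub by simp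
      show "card (\<sigma> ` {..<d}) = d" by (rule card)
    qed
    then show "x \<in> ideal_gen N (orbit_SN N (elem_sym n d))" using x by simp
  qed
qed


end
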